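(* Let $d$ be a positive integer, $\Omega(d)=\{\ket{\varphi}\bra{\varphi}:\ket{\varphi}\in\mathbb{C}^d,\ \langle\varphi|\varphi\rangle=1\}$, $\mu$ a Borel probability measure on $\Omega(d)$ and $f:\Omega(d)\to\mathbb{R}$ a continuous function such that \[ \int\mathrm{d}\mu(\varphi)\,f(\varphi)\,\ket{\varphi}\bra{\varphi}^{\otimes n}\ge 0\quad\text{for all } n\in\mathbb{N}. \] Then $f$ is nonnegative $\mu$-almost everywhere.
   Context: Points $\varphi\in\Omega(d)$ are identified with projectors $\ket{\varphi}\bra{\varphi}$; $\ge0$ means positive semidefinite as an operator on $(\mathbb{C}^d)^{\otimes n}$. *)

theory Defs
  imports "HOL-Analysis.Analysis" "HOL-Probability.Probability"
begin

text \<open>Dimension d is CARD('d) for a finite type 'd. Points of Omega(d) are the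
rank-one projectors |phi><phi|, represented as d x d complex matrices.\<close>

definition ket_bra :: "complex^'d \<Rightarrow> complex^'d^'d" where
  "ket_bra v = (\<chi> i j. v $ i * cnj (v $ j))"

definition pure_states :: "(complex^'d^'d::finite) set" where
  "pure_states = {P. \<exists>v::complex^'d. (\<Sum>i\<in>UNIV. cnj (v $ i) * v $ i) = 1 \<and> P = ket_bra v}"

text \<open>Multi-indices for the computational basis of (C^d)^{tensor n}.\<close>
definition multi_idx :: "nat \<Rightarrow> ('d::finite) list set" where
  "multi_idx n = {xs. length xs = n}"

definition tensor_pow_entry :: "nat \<Rightarrow> complex^'d^'d \<Rightarrow> 'd list \<Rightarrow> 'd list \<Rightarrow> complex" where
  "tensor_pow_entry n P is js = (\<Prod>k<n. P $ (is ! k) $ (js ! k))"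

definition psd_tensor :: "nat \<Rightarrow> ('d::finite list \<Rightarrow> 'd list \<Rightarrow> complex) \<Rightarrow> bool" where
  "psd_tensor n A \<longleftrightarrow> (\<forall>\<psi> :: 'd list \<Rightarrow> complex.
     (let q = (\<Sum>is\<in>multi_idx n. \<Sum>js\<in>multi_idx n. cnj (\<psi> is) * A is js * \<psi> js)
      in Im q = 0 \<and> Re q \<ge> 0))"

end

theory Submission
  imports Defs
begin


lemma finite_len: "finite {xs::'a::finite list. length xs = n}"
  using finite_lists_length_eq[of "UNIV::'a set" n] by simp

lemma sum_lists_prod:
  "(\<Sum>xs\<in>{xs::'a::finite list. length xs = n}. \<Prod>k<n. h k (xs!k)) = (\<Prod>k<n. \<Sum>x\<in>UNIV. (h k x :: 'b::comm_semiring_1))"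
proof (induction n arbitrary: h)
  case 0
  then show ?case by simp
next
  case (Suc n)
  have eq: "{xs::'a list. length xs = Suc n} = (\<lambda>(x,xs). x#xs) ` (UNIV \<times> {xs. length xs = n})"
    by (auto simp: image_iff length_Suc_conv)
  have inj: "inj_on (\<lambda>(x,xs). x#xs) (UNIV \<times> {xs::'a list. length xs = n})"
    by (auto simp: inj_on_def)
  have "(\<Sum>xs\<in>{xs::'a list. length xs = Suc n}. \<Prod>k<Suc n. h k (xs!k))
      = (\<Sum>p\<in>UNIV \<times> {xs::'a list. length xs = n}. \<Prod>k<Suc n. h k ((fst p # snd p)!k))"
    unfolding eq by (subst sum.reindex[OF inj]) (simp add: case_prod_beta)
  also have "\<dots> = (\<Sum>x\<in>UNIV. \<Sum>xs\<in>{xs::'a list. length xs = n}. h 0 x * (\<Prod>k<n. h (Suc k) (xs!k)))"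
    unfolding sum.cartesian_product
    by (intro sum.cong refl) (auto simp only: prod.lessThan_Suc_shift, simp)
  also have "\<dots> = (\<Sum>x\<in>UNIV. h 0 x * (\<Sum>xs\<in>{xs::'a list. length xs = n}. (\<Prod>k<n. h (Suc k) (xs!k))))"
    by (simp add: sum_distrib_left)
  also have "\<dots> = (\<Sum>x\<in>UNIV. h 0 x) * (\<Prod>k<n. \<Sum>x\<in>UNIV. h (Suc k) x)"
    using Suc.IH[of "\<lambda>k. h (Suc k)"] by (simp add: sum_distrib_right)
  also have "\<dots> = (\<Prod>k<Suc n. \<Sum>x\<in>UNIV. h k x)"
    by (simp only: prod.lessThan_Suc_shift)
  finally show ?case .
qed

lemma sum_lists_prod2:
  "(\<Sum>is\<in>{xs::'a::finite list. length xs = n}. \<Sum>js\<in>{xs::'a list. length xs = n}. \<Prod>k<n. g (is!k) (js!k))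
   = (\<Sum>i\<in>UNIV. \<Sum>j\<in>UNIV. (g i j :: 'b::comm_semiring_1)) ^ n"
proof -
  have "(\<Sum>is\<in>{xs::'a::finite list. length xs = n}. \<Sum>js\<in>{xs::'a list. length xs = n}. \<Prod>k<n. g (is!k) (js!k))
     = (\<Sum>is\<in>{xs::'a::finite list. length xs = n}. \<Prod>k<n. \<Sum>j\<in>UNIV. g (is!k) j)"
    by (intro sum.cong refl) (rule sum_lists_prod)
  also have "\<dots> = (\<Prod>k<n. \<Sum>i\<in>UNIV. \<Sum>j\<in>UNIV. g i j)"
    by (rule sum_lists_prod)
  finally show ?thesis by simp
qed


lemma norm_sq_vec: "(norm (x::'a::real_normed_vector^'n::finite))^2 = (\<Sum>i\<in>UNIV. (norm (x$i))^2)"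
  unfolding norm_vec_def L2_set_def by (simp add: sum_nonneg)

lemma cns: "(complex_of_real (cmod z))^2 = z * cnj z"
  using complex_norm_square[of z] by simp

lemma unit_iff: "(\<Sum>i\<in>UNIV. cnj (v $ i) * v $ i) = 1 \<longleftrightarrow> norm (v::complex^'d::finite) = 1"
proof -
  have "(\<Sum>i\<in>UNIV. cnj (v $ i) * v $ i) = of_real ((norm v)^2)"
    unfolding norm_sq_vec of_real_sum by (rule sum.cong[OF refl]) (subst complex_norm_square, rule mult.commute)
  then have "(\<Sum>i\<in>UNIV. cnj (v $ i) * v $ i) = 1 \<longleftrightarrow> (norm v)^2 = 1"
    by (metis of_real_eq_1_iff)
  also have "\<dots> \<longleftrightarrow> norm v = 1"
    using norm_ge_zero[of v] by (auto simp: power2_eq_1_iff) (metis norm_ge_zero neg_0_le_iff_le not_one_le_zero)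
  finally show ?thesis .
qed

lemma pure_states_image: "pure_states = ket_bra ` sphere (0::complex^'d::finite) 1"
  unfolding pure_states_def unit_iff by (auto simp: image_def)

lemma cont_ket_bra: "continuous_on UNIV (ket_bra :: complex^'d::finite \<Rightarrow> _)"
  unfolding ket_bra_def by (intro continuous_intros)

lemma compact_pure: "compact (pure_states :: (complex^'d::finite^'d) set)"
  unfolding pure_states_image
  by (rule compact_continuous_image[OF continuous_on_subset[OF cont_ket_bra]]) auto

lemma integrable_cont:
  fixes h :: "complex^'d::finite^'d \<Rightarrow> 'b::{banach,second_countable_topology}"
  assumes "prob_space \<mu>" "space \<mu> = pure_states"
    "sets \<mu> = sets (restrict_space borel pure_states)" "continuous_on pure_states h"
  shows "integrable \<mu> h"
proof -
  interpret prob_space \<mu> by fact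
  have "compact (h ` pure_states)" by (rule compact_continuous_image[OF assms(4) compact_pure])
  then obtain B where B: "\<And>x. x \<in> pure_states \<Longrightarrow> norm (h x) \<le> B"
    by (meson bounded_iff compact_imp_bounded imageI)
  have m: "h \<in> borel_measurable \<mu>"
    using borel_measurable_continuous_on_restrict[OF assms(4)] measurable_cong_sets[OF assms(3) refl]
    by blast
  show ?thesis
    by (rule integrable_const_bound[of _ B]) (use B assms(2) m in auto)
qed

lemma sum4: "(\<Sum>i\<in>I. \<Sum>j\<in>J. a i * b j - c i * d j - e i * f j + g i * h j) =
   sum a I * sum b J - sum c I * sum d J - sum e I * sum f J + sum g I * sum h J" for a :: "'i \<Rightarrow> 'r::comm_ring"
  by (simp add: sum_subtractf sum.distrib sum_product)

lemma dist_ket: 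
  fixes u v :: "complex^'d::finite"
  assumes "norm u = 1" "norm v = 1"
  shows "(dist (ket_bra v) (ket_bra u))^2 = 2 - 2 * (cmod (\<Sum>i\<in>UNIV. cnj (u$i) * v$i))^2"
proof -
  define c where "c = (\<Sum>i\<in>UNIV. cnj (u$i) * v$i)"
  have nu: "(\<Sum>i\<in>UNIV. cnj (u $ i) * u $ i) = 1" using assms unit_iff by blast
  have nv: "(\<Sum>i\<in>UNIV. cnj (v $ i) * v $ i) = 1" using assms unit_iff by blast
  have cc: "(\<Sum>i\<in>UNIV. cnj (v$i) * u$i) = cnj c" unfolding c_def by (simp add: mult.commute)
  define z where "z i j = v$i * cnj (v$j) - u$i * cnj (u$j)" for i j
  have "(dist (ket_bra v) (ket_bra u))^2 = (\<Sum>i\<in>UNIV. \<Sum>j\<in>UNIV. (norm (z i j))^2)"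
    unfolding dist_norm norm_sq_vec z_def ket_bra_def by simp
  hence "complex_of_real ((dist (ket_bra v) (ket_bra u))^2) = (\<Sum>i\<in>UNIV. \<Sum>j\<in>UNIV. z i j * cnj (z i j))"
    by (simp only: of_real_sum complex_norm_square)
  also have "\<dots> = (\<Sum>i\<in>UNIV. \<Sum>j\<in>UNIV. (cnj (v$i) * v$i) * (cnj (v$j) * v$j) - (cnj (u$i) * v$i) * (cnj (v$j) * u$j)
       - (cnj (v$i) * u$i) * (cnj (u$j) * v$j) + (cnj (u$i) * u$i) * (cnj (u$j) * u$j))"
    unfolding z_def by (intro sum.cong refl) (simp add: algebra_simps)
  also have "\<dots> = (\<Sum>i\<in>UNIV. cnj (v $ i) * v $ i) * (\<Sum>i\<in>UNIV. cnj (v $ i) * v $ i)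
     - c * (\<Sum>i\<in>UNIV. cnj (v$i) * u$i) - (\<Sum>i\<in>UNIV. cnj (v$i) * u$i) * (\<Sum>i\<in>UNIV. cnj (u$i) * v$i)
     + (\<Sum>i\<in>UNIV. cnj (u $ i) * u $ i) * (\<Sum>i\<in>UNIV. cnj (u $ i) * u $ i)"
    unfolding c_def by (rule sum4)
  also have "\<dots> = of_real (2 - 2 * (cmod c)^2)"
    unfolding nu nv cc c_def[symmetric] using complex_norm_square[of c] by (simp add: algebra_simps)
  finally show ?thesis unfolding c_def of_real_eq_iff .
qed

lemma T_ket:
  fixes u v :: "complex^'d::finite"
  shows "(\<Sum>i\<in>UNIV. \<Sum>j\<in>UNIV. cnj (u$i) * ket_bra v $ i $ j * u$j) = of_real ((cmod (\<Sum>i\<in>UNIV. cnj (u$i) * v$i))^2)"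
proof -
  have "(\<Sum>i\<in>UNIV. \<Sum>j\<in>UNIV. cnj (u$i) * ket_bra v $ i $ j * u$j)
      = (\<Sum>i\<in>UNIV. \<Sum>j\<in>UNIV. (cnj (u$i) * v$i) * (cnj (v$j) * u$j))"
    unfolding ket_bra_def by (simp add: algebra_simps)
  also have "\<dots> = (\<Sum>i\<in>UNIV. cnj (u$i) * v$i) * (\<Sum>j\<in>UNIV. cnj (v$j) * u$j)"
    by (simp only: sum_product)
  also have "\<dots> = (\<Sum>i\<in>UNIV. cnj (u$i) * v$i) * cnj (\<Sum>i\<in>UNIV. cnj (u$i) * v$i)"
    by (simp add: mult.commute)
  finally show ?thesis by (simp only: complex_norm_square)
qed


lemma local_null:
  fixes \<mu> :: "(complex^'d^'d::finite) measure"
    and f :: "complex^'d^'d \<Rightarrow> real"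
  assumes "prob_space \<mu>"
    and sp: "space \<mu> = pure_states"
    and sts: "sets \<mu> = sets (restrict_space borel pure_states)"
    and fc: "continuous_on pure_states f"
    and psd: "\<And>n::nat. psd_tensor n
           (\<lambda>is js. integral\<^sup>L \<mu> (\<lambda>\<phi>. complex_of_real (f \<phi>) * tensor_pow_entry n \<phi> is js))"
    and \<phi>0: "\<phi>0 \<in> pure_states" and neg: "f \<phi>0 < 0"
  shows "\<exists>r>0. ball \<phi>0 r \<inter> pure_states \<in> null_sets \<mu>"
proof -
  interpret P: prob_space \<mu> by fact
  obtain u where u1: "norm u = 1" and \<phi>0u: "\<phi>0 = ket_bra u"
    using \<phi>0 unfolding pure_states_def unit_iff by blast
  define \<epsilon> where "\<epsilon> = - f \<phi>0 / 2"
  have \<epsilon>pos: "\<epsilon> > 0" using neg unfolding \<epsilon>_def by simp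
  obtain r0 where r0: "r0 > 0" "\<And>\<phi>. \<phi> \<in> pure_states \<Longrightarrow> dist \<phi> \<phi>0 < r0 \<Longrightarrow> f \<phi> < -\<epsilon>"
  proof -
    obtain d where d: "d > 0" "\<forall>x'\<in>pure_states. dist x' \<phi>0 < d \<longrightarrow> dist (f x') (f \<phi>0) < \<epsilon>"
      using fc \<phi>0 \<epsilon>pos unfolding continuous_on_iff by blast
    have "f \<phi> < -\<epsilon>" if "\<phi> \<in> pure_states" "dist \<phi> \<phi>0 < d" for \<phi>
      using d(2) that unfolding \<epsilon>_def dist_real_def by fastforce
    then show ?thesis using that d(1) by blast
  qed
  define r where "r = min r0 1"
  have rpos: "r > 0" and rle: "r \<le> 1" and rr0: "r \<le> r0" using r0 unfolding r_def by auto
  define T where "T \<phi> = (\<Sum>i\<in>UNIV. \<Sum>j\<in>UNIV. cnj (u$i) * \<phi>$i$j * u$j)" for \<phi> :: "complex^'d^'d"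
  define t where "t \<phi> = Re (T \<phi>)" for \<phi>
  have tprops: "T \<phi> = of_real (t \<phi>) \<and> t \<phi> \<ge> 0 \<and> (dist \<phi> \<phi>0)^2 = 2 - 2 * t \<phi>"
    if phi: "\<phi> \<in> pure_states" for \<phi>
  proof -
    obtain v where v1: "norm v = 1" and \<phi>v: "\<phi> = ket_bra v"
      using phi unfolding pure_states_def unit_iff by blast
    have "T \<phi> = of_real ((cmod (\<Sum>i\<in>UNIV. cnj (u$i) * v$i))^2)"
      unfolding T_def \<phi>v by (rule T_ket)
    then show ?thesis unfolding t_def \<phi>v \<phi>0u using dist_ket[OF u1 v1] by simp
  qed
  obtain M where M: "\<And>\<phi>. \<phi> \<in> pure_states \<Longrightarrow> \<bar>f \<phi>\<bar> \<le> M"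
  proof -
    have "compact (f ` pure_states)" by (rule compact_continuous_image[OF fc compact_pure])
    then show ?thesis using that
      by (metis bounded_iff compact_imp_bounded imageI real_norm_def)
  qed
  have M0: "M \<ge> 0" using M[OF \<phi>0] by simp
  define a where "a = 1 - r^2/2"
  define b where "b = 1 - r^2/8"
  define A where "A = ball \<phi>0 (r/2) \<inter> pure_states"
  have apos: "a > 0" and ab: "a < b" and bpos: "b > 0"
  proof -
    have "r^2 \<le> 1" using rpos rle by (simp add: power_le_one)
    moreover have "r^2 > 0" using rpos by simp
    ultimately show "a > 0" "a < b" "b > 0" unfolding a_def b_def by auto
  qed
  have Asets: "A \<in> sets \<mu>"
    unfolding sts sets_restrict_space A_def by (auto simp: image_def)
  have ineq: "\<epsilon> * b^n * measure \<mu> A \<le> M * a^n" for n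
  proof -
    define \<psi> where "\<psi> xs = (\<Prod>k<n. u $ (xs!k))" for xs :: "'d list"
    define F where "F xs ys \<phi> = complex_of_real (f \<phi>) * tensor_pow_entry n \<phi> xs ys" for xs ys \<phi>
    define L where "L = (multi_idx n :: 'd list set)"
    define q where "q = (\<Sum>xs\<in>L. \<Sum>ys\<in>L. cnj (\<psi> xs) * integral\<^sup>L \<mu> (F xs ys) * \<psi> ys)"
    have q0: "Im q = 0 \<and> Re q \<ge> 0"
      using psd[of n, unfolded psd_tensor_def Let_def, rule_format, of \<psi>]
      unfolding q_def F_def L_def by simp
    have contG: "continuous_on pure_states (\<lambda>\<phi>. cnj (\<psi> xs) * F xs ys \<phi> * \<psi> ys)" for xs ys
      unfolding F_def tensor_pow_entry_def by (intro continuous_intros fc)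
    have intG: "integrable \<mu> (\<lambda>\<phi>. cnj (\<psi> xs) * F xs ys \<phi> * \<psi> ys)" for xs ys
      by (rule integrable_cont[OF assms(1) sp sts contG])
    have "q = (\<Sum>xs\<in>L. \<Sum>ys\<in>L. integral\<^sup>L \<mu> (\<lambda>\<phi>. cnj (\<psi> xs) * F xs ys \<phi> * \<psi> ys))"
      unfolding q_def by simp
    also have "\<dots> = (\<Sum>xs\<in>L. integral\<^sup>L \<mu> (\<lambda>\<phi>. \<Sum>ys\<in>L. cnj (\<psi> xs) * F xs ys \<phi> * \<psi> ys))"
      by (intro sum.cong refl) (simp add: intG)
    also have "\<dots> = integral\<^sup>L \<mu> (\<lambda>\<phi>. \<Sum>xs\<in>L. \<Sum>ys\<in>L. cnj (\<psi> xs) * F xs ys \<phi> * \<psi> ys)"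
      by (rule Bochner_Integration.integral_sum[where I=L and M=\<mu> and f="\<lambda>xs \<phi>. \<Sum>ys\<in>L. cnj (\<psi> xs) * F xs ys \<phi> * \<psi> ys", symmetric])
         (auto intro!: integrable_sum intG)
    also have "\<dots> = integral\<^sup>L \<mu> (\<lambda>\<phi>. complex_of_real (f \<phi> * t \<phi> ^ n))"
    proof (rule Bochner_Integration.integral_cong[OF refl])
      fix \<phi> assume "\<phi> \<in> space \<mu>"
      then have phi: "\<phi> \<in> pure_states" using sp by simp
      have "(\<Sum>xs\<in>L. \<Sum>ys\<in>L. cnj (\<psi> xs) * F xs ys \<phi> * \<psi> ys) = of_real (f \<phi>) *
          (\<Sum>xs\<in>L. \<Sum>ys\<in>L. \<Prod>k<n. cnj (u$(xs!k)) * \<phi>$(xs!k)$(ys!k) * u$(ys!k))"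
        unfolding sum_distrib_left F_def tensor_pow_entry_def \<psi>_def
        by (intro sum.cong refl) (simp add: prod.distrib mult_ac)
      also have "\<dots> = of_real (f \<phi>) * T \<phi> ^ n"
        unfolding L_def multi_idx_def T_def by (subst sum_lists_prod2) simp
      also have "\<dots> = of_real (f \<phi> * t \<phi> ^ n)" using tprops[OF phi] by simp
      finally show "(\<Sum>xs\<in>L. \<Sum>ys\<in>L. cnj (\<psi> xs) * F xs ys \<phi> * \<psi> ys) = of_real (f \<phi> * t \<phi> ^ n)" .
    qed
    also have "\<dots> = of_real (integral\<^sup>L \<mu> (\<lambda>\<phi>. f \<phi> * t \<phi> ^ n))" by (rule integral_complex_of_real)
    finally have "Re q = integral\<^sup>L \<mu> (\<lambda>\<phi>. f \<phi> * t \<phi> ^ n)" by simp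
    with q0 have I0: "0 \<le> integral\<^sup>L \<mu> (\<lambda>\<phi>. f \<phi> * t \<phi> ^ n)" by simp
    have intft: "integrable \<mu> (\<lambda>\<phi>. f \<phi> * t \<phi> ^ n)"
      by (rule integrable_cont[OF assms(1) sp sts]) (unfold t_def T_def, intro continuous_intros fc)
    have Ma: "M * a^n \<ge> 0" using M0 apos by simp
    have pw: "f \<phi> * t \<phi> ^ n \<le> M * a^n - \<epsilon> * b^n * indicator A \<phi>" if phi: "\<phi> \<in> pure_states" for \<phi>
    proof -
      from tprops[OF phi] have t0: "t \<phi> \<ge> 0" and d2: "(dist \<phi> \<phi>0)^2 = 2 - 2 * t \<phi>" by auto
      have Mf: "\<bar>f \<phi>\<bar> \<le> M" by (rule M[OF phi])
      have tn0: "t \<phi> ^ n \<ge> 0" using t0 by simp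
      show ?thesis
      proof (cases "dist \<phi> \<phi>0 < r")
        case True
        then have fneg: "f \<phi> < -\<epsilon>" using r0(2)[OF phi] rr0 by simp
        show ?thesis
        proof (cases "\<phi> \<in> A")
          case True
          then have "dist \<phi> \<phi>0 < r/2" unfolding A_def by (simp add: dist_commute)
          then have "(dist \<phi> \<phi>0)^2 < (r/2)^2" by (simp add: power_strict_mono)
          then have "t \<phi> \<ge> b" using d2 unfolding b_def by (simp add: power_divide)
          then have tb: "t \<phi> ^ n \<ge> b^n" using bpos by (simp add: power_mono)
          have "f \<phi> * t \<phi> ^ n \<le> -\<epsilon> * t \<phi> ^ n" using mult_right_mono[OF less_imp_le[OF fneg] tn0] by simp
          also have "\<dots> \<le> -\<epsilon> * b^n" using tb \<epsilon>pos by simp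
          finally show ?thesis using Ma True by simp
        next
          case False
          have "f \<phi> * t \<phi> ^ n \<le> 0" using fneg \<epsilon>pos tn0 by (simp add: mult_nonpos_nonneg)
          with False show ?thesis using Ma by simp
        qed
      next
        case False
        then have "r^2 \<le> (dist \<phi> \<phi>0)^2" using rpos by (simp add: power_mono)
        then have ta: "t \<phi> \<le> a" using d2 unfolding a_def by simp
        have nA: "\<phi> \<notin> A" using False rpos unfolding A_def by (auto simp: dist_commute)
        have "f \<phi> * t \<phi> ^ n \<le> \<bar>f \<phi>\<bar> * t \<phi> ^ n" using tn0 by (simp add: mult_right_mono)
        also have "\<dots> \<le> M * a ^ n" using Mf t0 ta M0 by (intro mult_mono power_mono) auto
        finally show ?thesis using nA by simp
      qed
    qed
    have intA: "integrable \<mu> (\<lambda>\<phi>. M * a^n - \<epsilon> * b^n * indicator A \<phi>)"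
      using Asets by (intro Bochner_Integration.integrable_diff Bochner_Integration.integrable_mult_right
          integrable_real_indicator) (auto simp: P.emeasure_eq_measure)
    have "integral\<^sup>L \<mu> (\<lambda>\<phi>. f \<phi> * t \<phi> ^ n) \<le> integral\<^sup>L \<mu> (\<lambda>\<phi>. M * a^n - \<epsilon> * b^n * indicator A \<phi>)"
      by (rule integral_mono[OF intft intA]) (simp add: sp pw)
    also have "\<dots> = M * a^n - \<epsilon> * b^n * measure \<mu> A"
    proof -
      have "A \<inter> space \<mu> = A" unfolding A_def sp by auto
      then show ?thesis
        using Asets by (subst Bochner_Integration.integral_diff) (auto simp: P.emeasure_eq_measure P.prob_space)
    qed
    finally show ?thesis using I0 by simp
  qed
  have "measure \<mu> A \<le> 0"
  proof (rule LIMSEQ_le_const)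
    show "(\<lambda>n. (M/\<epsilon>) * (a/b)^n) \<longlonglongrightarrow> 0"
      by (intro tendsto_mult_right_zero LIMSEQ_power_zero) (use apos ab in simp)
    show "\<exists>N. \<forall>n\<ge>N. measure \<mu> A \<le> (M/\<epsilon>) * (a/b)^n"
    proof (intro exI allI impI)
      fix n
      have "b^n > 0" using bpos by simp
      then show "measure \<mu> A \<le> (M/\<epsilon>) * (a/b)^n"
        using ineq[of n] \<epsilon>pos by (simp add: power_divide field_simps)
    qed
  qed
  then have "measure \<mu> A = 0" by (simp add: measure_nonneg antisym)
  then have "A \<in> null_sets \<mu>"
    using Asets by (simp add: P.emeasure_eq_measure null_sets_def)
  then show ?thesis using rpos unfolding A_def by (intro exI[of _ "r/2"]) auto
qed


theorem corollary2:
  fixes \<mu> :: "(complex^'d^'d::finite) measure"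
    and f :: "complex^'d^'d \<Rightarrow> real"
  assumes "prob_space \<mu>"
    and "space \<mu> = pure_states"
    and "sets \<mu> = sets (restrict_space borel pure_states)"
    and "continuous_on pure_states f"
    and "\<And>n::nat. psd_tensor n
           (\<lambda>is js. integral\<^sup>L \<mu> (\<lambda>\<phi>. complex_of_real (f \<phi>) * tensor_pow_entry n \<phi> is js))"
  shows "AE \<phi> in \<mu>. f \<phi> \<ge> 0"
proof -
  define \<F> where "\<F> = {B. \<exists>x r. B = ball x r \<and> ball x r \<inter> pure_states \<in> null_sets \<mu>}"
  have opn: "\<And>S. S \<in> \<F> \<Longrightarrow> open S" unfolding \<F>_def by auto
  obtain \<G> where G: "\<G> \<subseteq> \<F>" "countable \<G>" "\<Union>\<G> = \<Union>\<F>"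
    using Lindelof[OF opn] by blast
  have N: "(\<Union>B\<in>\<G>. B \<inter> pure_states) \<in> null_sets \<mu>"
  proof (rule null_sets_UN')
    show "countable \<G>" by (rule G(2))
    show "\<And>B. B \<in> \<G> \<Longrightarrow> B \<inter> pure_states \<in> null_sets \<mu>" using G(1) unfolding \<F>_def by auto
  qed
  have sub: "{x \<in> space \<mu>. \<not> f x \<ge> 0} \<subseteq> (\<Union>B\<in>\<G>. B \<inter> pure_states)"
  proof
    fix x assume x: "x \<in> {x \<in> space \<mu>. \<not> f x \<ge> 0}"
    then have xp: "x \<in> pure_states" and fx: "f x < 0" using assms(2) by auto
    obtain r where r: "r > 0" "ball x r \<inter> pure_states \<in> null_sets \<mu>"
      using local_null[OF assms xp fx] by blast
    then have "ball x r \<in> \<F>" unfolding \<F>_def by blast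
    moreover have "x \<in> ball x r" using r(1) by simp
    ultimately have "x \<in> \<Union>\<F>" by blast
    then have "x \<in> \<Union>\<G>" using G(3) by simp
    then show "x \<in> (\<Union>B\<in>\<G>. B \<inter> pure_states)" using xp by auto
  qed
  show ?thesis by (rule AE_I'[OF N sub])
qed

end
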